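(* Let $F$ be a field of characteristic zero and let $A$ be a $\#$-superalgebra over $F$. If $A$ is a PI-algebra, then there is a real number $\overline d$ such that $c_n^{grs}(A)\leq \overline d^{\,n}$ for every $n\geq1$.
   Context: All algebras are associative over $F$. A superalgebra is $A=A_0\oplus A_1$ with $A_iA_j\subseteq A_{(i+j)\bmod 2}$. A superinvolution is an $F$-linear map $\#:A\to A$ with $A_i^\#\subseteq A_i$, $(c^\#)^\#=c$, $(ab)^\#=(-1)^{\deg a\deg b}b^\#a^\#$ for homogeneous $a,b$; a graded involution is an $F$-linear map $\#$ with $A_i^\#\subseteq A_i$, $(c^\#)^\#=c$, $(ab)^\#=b^\#a^\#$. A $\#$-superalgebra is a superalgebra with one of these. $A_i^{\pm}=\{a\in A_i:a^\#=\pm a\}$. $A$ is a PI-algebra if it satisfies a nontrivial ordinary polynomial identity. Let $\mathcal F$ be the free non-unital associative algebra on variables $y_{i,j}$ (symmetric) and $z_{i,j}$ ($i\in\{0,1\}$, $j\ge1$, skew), with variables of index $i$ of $\mathbb Z_2$-degree $i$, equipped with the induced superinvolution or graded involution ($y^\#=y$, $z^\#=-z$). A $\#$-superidentity of $A$ is an element of $\mathcal F$ vanishing under all substitutions $y_{0,j}\mapsto A_0^+$, $z_{0,j}\mapsto A_0^-$, $y_{1,j}\mapsto A_1^+$, $z_{1,j}\mapsto A_1^-$; $Id_2^\#(A)$ denotes their set. $P_n^{grs}$ is the span of the monomials $w_{\sigma(1)}\cdots w_{\sigma(n)}$, $\sigma\in S_n$, $w_i\in\{y_{0,i},z_{0,i},y_{1,i},z_{1,i}\}$,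 and $c_n^{grs}(A)=\dim P_n^{grs}/(P_n^{grs}\cap Id_2^\#(A))$. *)

theory Defs
  imports Complex_Main "HOL-Library.Function_Algebras"
begin

text \<open>The algebra A is the whole carrier type 'a (class ring = associative, not
necessarily unital ring), with F-scalar multiplication sc.\<close>

definition assoc_algebra :: "('f::field \<Rightarrow> 'a::ring \<Rightarrow> 'a) \<Rightarrow> bool" where
  "assoc_algebra sc \<longleftrightarrow> module sc \<and>
     (\<forall>c a b. sc c (a * b) = sc c a * b \<and> sc c (a * b) = a * sc c b)"

text \<open>Z2-grading: Ag False = A_0, Ag True = A_1 (degree True means odd).\<close>

definition superalgebra :: "('f::field \<Rightarrow> 'a::ring \<Rightarrow> 'a) \<Rightarrow> (bool \<Rightarrow> 'a set) \<Rightarrow> bool" where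
  "superalgebra sc Ag \<longleftrightarrow> assoc_algebra sc \<and>
     (\<forall>i. module.subspace sc (Ag i)) \<and>
     (\<forall>a. \<exists>!p. fst p \<in> Ag False \<and> snd p \<in> Ag True \<and> a = fst p + snd p) \<and>
     (\<forall>i j a b. a \<in> Ag i \<longrightarrow> b \<in> Ag j \<longrightarrow> a * b \<in> Ag (i \<noteq> j))"

definition graded_linear_involutive ::
  "('f::field \<Rightarrow> 'a::ring \<Rightarrow> 'a) \<Rightarrow> (bool \<Rightarrow> 'a set) \<Rightarrow> ('a \<Rightarrow> 'a) \<Rightarrow> bool" where
  "graded_linear_involutive sc Ag star \<longleftrightarrow>
     (\<forall>a b. star (a + b) = star a + star b) \<and> (\<forall>c a. star (sc c a) = sc c (star a)) \<and>
     (\<forall>i a. a \<in> Ag i \<longrightarrow> star a \<in> Ag i) \<and> (\<forall>a. star (star a) = a)"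

definition superinvolution ::
  "('f::field \<Rightarrow> 'a::ring \<Rightarrow> 'a) \<Rightarrow> (bool \<Rightarrow> 'a set) \<Rightarrow> ('a \<Rightarrow> 'a) \<Rightarrow> bool" where
  "superinvolution sc Ag star \<longleftrightarrow> graded_linear_involutive sc Ag star \<and>
     (\<forall>i j a b. a \<in> Ag i \<longrightarrow> b \<in> Ag j \<longrightarrow>
        star (a * b) = (if i \<and> j then - (star b * star a) else star b * star a))"

definition graded_involution ::
  "('f::field \<Rightarrow> 'a::ring \<Rightarrow> 'a) \<Rightarrow> (bool \<Rightarrow> 'a set) \<Rightarrow> ('a \<Rightarrow> 'a) \<Rightarrow> bool" where
  "graded_involution sc Ag star \<longleftrightarrow> graded_linear_involutive sc Ag star \<and>
     (\<forall>a b. star (a * b) = star b * star a)"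

definition sharp_superalgebra ::
  "('f::field \<Rightarrow> 'a::ring \<Rightarrow> 'a) \<Rightarrow> (bool \<Rightarrow> 'a set) \<Rightarrow> ('a \<Rightarrow> 'a) \<Rightarrow> bool" where
  "sharp_superalgebra sc Ag star \<longleftrightarrow> superalgebra sc Ag \<and>
     (superinvolution sc Ag star \<or> graded_involution sc Ag star)"

text \<open>An element of the free non-unital algebra on variables 'v is a finitely supported
coefficient function on words, with zero coefficient on the empty word.\<close>

definition free_poly :: "('v list \<Rightarrow> 'f::field) \<Rightarrow> bool" where
  "free_poly p \<longleftrightarrow> finite {w. p w \<noteq> 0} \<and> p [] = 0"

definition pscale :: "'f::field \<Rightarrow> ('v list \<Rightarrow> 'f) \<Rightarrow> ('v list \<Rightarrow> 'f)" where
  "pscale c p = (\<lambda>w. c * p w)"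

fun eval_word :: "('v \<Rightarrow> 'a::ring) \<Rightarrow> 'v list \<Rightarrow> 'a" where
  "eval_word s [] = 0"
| "eval_word s [x] = s x"
| "eval_word s (x # y # xs) = s x * eval_word s (y # xs)"

definition eval_poly ::
  "('f::field \<Rightarrow> 'a::ring \<Rightarrow> 'a) \<Rightarrow> ('v \<Rightarrow> 'a) \<Rightarrow> ('v list \<Rightarrow> 'f) \<Rightarrow> 'a" where
  "eval_poly sc s p = (\<Sum>w\<in>{w. p w \<noteq> 0}. sc (p w) (eval_word s w))"

definition PI_algebra :: "('f::field \<Rightarrow> 'a::ring \<Rightarrow> 'a) \<Rightarrow> bool" where
  "PI_algebra sc \<longleftrightarrow> (\<exists>p :: nat list \<Rightarrow> 'f. free_poly p \<and> p \<noteq> (\<lambda>_. 0) \<and>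
      (\<forall>s :: nat \<Rightarrow> 'a. eval_poly sc s p = 0))"

text \<open>Y i j = y_{i,j} (symmetric), Z i j = z_{i,j} (skew); i = False/True is degree 0/1.\<close>

datatype svar = Y bool nat | Z bool nat

fun vidx :: "svar \<Rightarrow> nat" where
  "vidx (Y i j) = j"
| "vidx (Z i j) = j"

definition admissible_subst ::
  "(bool \<Rightarrow> 'a::ring set) \<Rightarrow> ('a \<Rightarrow> 'a) \<Rightarrow> (svar \<Rightarrow> 'a) \<Rightarrow> bool" where
  "admissible_subst Ag star s \<longleftrightarrow>
     (\<forall>i j. s (Y i j) \<in> Ag i \<and> star (s (Y i j)) = s (Y i j)) \<and>
     (\<forall>i j. s (Z i j) \<in> Ag i \<and> star (s (Z i j)) = - s (Z i j))"

definition sharp_superids ::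
  "('f::field \<Rightarrow> 'a::ring \<Rightarrow> 'a) \<Rightarrow> (bool \<Rightarrow> 'a set) \<Rightarrow> ('a \<Rightarrow> 'a) \<Rightarrow> (svar list \<Rightarrow> 'f) set" where
  "sharp_superids sc Ag star = {p. free_poly p \<and>
      (\<forall>s. admissible_subst Ag star s \<longrightarrow> eval_poly sc s p = 0)}"

definition multilinear_words :: "nat \<Rightarrow> svar list set" where
  "multilinear_words n = {w. length w = n \<and> set (map vidx w) = {1..n}}"

definition P_grs :: "nat \<Rightarrow> (svar list \<Rightarrow> 'f::field) set" where
  "P_grs n = {p. \<forall>w. p w \<noteq> 0 \<longrightarrow> w \<in> multilinear_words n}"

text \<open>dim (P_n / (P_n \<inter> Id)) = dim P_n - dim (P_n \<inter> Id), P_n being finite dimensional.\<close>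

definition c_grs ::
  "('f::field \<Rightarrow> 'a::ring \<Rightarrow> 'a) \<Rightarrow> (bool \<Rightarrow> 'a set) \<Rightarrow> ('a \<Rightarrow> 'a) \<Rightarrow> nat \<Rightarrow> nat" where
  "c_grs sc Ag star n =
     vector_space.dim (pscale :: 'f \<Rightarrow> _) (P_grs n) -
     vector_space.dim (pscale :: 'f \<Rightarrow> _) (P_grs n \<inter> sharp_superids sc Ag star)"

end

theory Submission
  imports Defs
begin

lemma vs_pscale: "vector_space (pscale :: 'f::field \<Rightarrow> ('v list \<Rightarrow> 'f) \<Rightarrow> _)"
  unfolding vector_space_def module_def pscale_def
  by (auto simp: fun_eq_iff algebra_simps)

locale nalg = module scale for scale :: "'f::field \<Rightarrow> 'a::ring \<Rightarrow> 'a" +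
  assumes multL: "scale c (a * b) = scale c a * b"
    and multR: "scale c (a * b) = a * scale c b"
begin

lemma eval_poly_alt:
  assumes "finite W" "{w. p w \<noteq> 0} \<subseteq> W"
  shows "eval_poly scale s p = (\<Sum>w\<in>W. scale (p w) (eval_word s w))"
  unfolding eval_poly_def
  by (rule sum.mono_neutral_left) (use assms in auto)

lemma eval_word_Cons: "ys \<noteq> [] \<Longrightarrow> eval_word s (x # ys) = s x * eval_word s ys"
  by (cases ys) auto

lemma eval_word_append:
  "xs \<noteq> [] \<Longrightarrow> ys \<noteq> [] \<Longrightarrow> eval_word s (xs @ ys) = eval_word s xs * eval_word s ys"
proof (induction xs)
  case Nil then show ?case by simp
next
  case (Cons x xs)
  show ?case
  proof (cases "xs = []")
    case True then show ?thesis using Cons by (simp add: eval_word_Cons)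
  next
    case False then show ?thesis using Cons by (simp add: eval_word_Cons mult.assoc)
  qed
qed

lemma eval_word_concat:
  "(\<forall>j\<in>set \<phi>. blk j \<noteq> []) \<Longrightarrow>
   eval_word s (concat (map blk \<phi>)) = eval_word (\<lambda>j. eval_word s (blk j)) \<phi>"
proof (induction \<phi>)
  case Nil then show ?case by simp
next
  case (Cons j \<phi>)
  show ?case
  proof (cases "\<phi> = []")
    case True then show ?thesis by simp
  next
    case False
    then have "concat (map blk \<phi>) \<noteq> []" using Cons.prems by (cases \<phi>) auto
    then show ?thesis using Cons False by (simp add: eval_word_append eval_word_Cons)
  qed
qed

end

lemma sharp_nalg:
  assumes "sharp_superalgebra sc Ag star" shows "nalg sc"
  using assms unfolding sharp_superalgebra_def superalgebra_def assoc_algebra_def nalg_def nalg_axioms_def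
  by metis

definition perms :: "nat \<Rightarrow> nat list set" where
  "perms d = {\<phi>. distinct \<phi> \<and> set \<phi> = {0..<d}}"

definition Phi :: "'v list \<Rightarrow> nat set \<Rightarrow> 'v list \<Rightarrow> nat list set" where
  "Phi m S w = {\<phi>. length \<phi> = length w \<and> set \<phi> \<subseteq> S \<and> map (nth m) \<phi> = w}"

lemma finite_Phi: "finite S \<Longrightarrow> finite (Phi m S w)"
proof -
  assume "finite S"
  then have "finite {\<phi>. set \<phi> \<subseteq> S \<and> length \<phi> = length w}" by (rule finite_lists_length_eq)
  then show ?thesis by (rule rev_finite_subset) (auto simp: Phi_def)
qed

lemma Phi_Nil: "Phi m S [] = {[]}" by (auto simp: Phi_def)

lemma Phi_single: "Phi m S [x] = (\<lambda>q. [q]) ` {q\<in>S. m ! q = x}"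
  by (auto simp: Phi_def length_Suc_conv)

lemma Phi_Cons: "Phi m S (x # w) = (\<lambda>(q,\<phi>). q # \<phi>) ` ({q\<in>S. m ! q = x} \<times> Phi m S w)"
  by (auto simp: Phi_def length_Suc_conv)

lemma finite_perms: "finite (perms d)"
proof -
  have "finite {\<phi>. set \<phi> \<subseteq> {0..<d} \<and> length \<phi> = d}" by (rule finite_lists_length_eq) simp
  then show ?thesis by (rule rev_finite_subset) (auto simp: perms_def distinct_card[symmetric])
qed

lemma alt_sum:
  assumes "finite U" "T \<subseteq> U"
  shows "(\<Sum>S | S \<subseteq> U \<and> T \<subseteq> S. (-1::'f::ring_1) ^ card S) = (if T = U then (-1) ^ card U else 0)"
proof (cases "T = U")
  case True
  then have "{S. S \<subseteq> U \<and> T \<subseteq> S} = {U}" by auto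
  then show ?thesis using True by simp
next
  case False
  then have "T \<subset> U" using assms by auto
  have fin: "finite {S. S \<subseteq> U \<and> T \<subseteq> S}"
    by (rule finite_subset[of _ "Pow U"]) (use assms in auto)
  have "(\<Sum>S | S \<subseteq> U \<and> T \<subseteq> S. (-1::'f) ^ card S) = 0"
    apply (rule sum_alternating_cancels[OF fin])
    using card_subsupersets_even_odd[OF assms(1) \<open>T \<subset> U\<close>] by simp
  then show ?thesis using False by simp
qed

context nalg
begin

lemma expand:
  assumes "finite S"
  shows "eval_word (\<lambda>i. \<Sum>q\<in>{q\<in>S. m ! q = i}. a q) w = (\<Sum>\<phi>\<in>Phi m S w. eval_word a \<phi>)"
proof (induction w)
  case Nil then show ?case by (simp add: Phi_Nil)
next
  case (Cons x w)
  show ?case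
  proof (cases "w = []")
    case True
    then show ?thesis by (simp add: Phi_single sum.reindex inj_on_def)
  next
    case False
    have ne: "\<phi> \<noteq> []" if "\<phi> \<in> Phi m S w" for \<phi> using that False by (auto simp: Phi_def)
    have inj: "inj_on (\<lambda>(q,\<phi>). q # \<phi>) ({q\<in>S. m ! q = x} \<times> Phi m S w)" by (auto simp: inj_on_def)
    have "eval_word (\<lambda>i. \<Sum>q\<in>{q\<in>S. m ! q = i}. a q) (x # w)
       = (\<Sum>q\<in>{q\<in>S. m ! q = x}. a q) * (\<Sum>\<phi>\<in>Phi m S w. eval_word a \<phi>)"
      using False Cons.IH by (simp add: eval_word_Cons)
    also have "\<dots> = (\<Sum>q\<in>{q\<in>S. m ! q = x}. \<Sum>\<phi>\<in>Phi m S w. a q * eval_word a \<phi>)"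
      by (simp add: sum_distrib_left sum_distrib_right sum.swap[of _ "Phi m S w"])
    also have "\<dots> = (\<Sum>q\<in>{q\<in>S. m ! q = x}. \<Sum>\<phi>\<in>Phi m S w. eval_word a (q # \<phi>))"
      by (intro sum.cong refl) (simp add: eval_word_Cons ne)
    also have "\<dots> = (\<Sum>(q,\<phi>)\<in>{q\<in>S. m ! q = x} \<times> Phi m S w. eval_word a (q # \<phi>))"
      by (simp add: sum.cartesian_product)
    also have "\<dots> = (\<Sum>\<phi>\<in>Phi m S (x # w). eval_word a \<phi>)"
      unfolding Phi_Cons by (subst sum.reindex[OF inj]) (simp add: case_prod_unfold)
    finally show ?thesis .
  qed
qed


lemma multilin:
  assumes fp: "free_poly p" and nz: "p \<noteq> (\<lambda>_. 0)" and pid: "\<forall>s. eval_poly scale s p = 0"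
  shows "\<exists>d (\<beta>::nat list \<Rightarrow> 'f). 1 \<le> d \<and> \<beta> [0..<d] \<noteq> 0 \<and>
           (\<forall>a. (\<Sum>\<phi>\<in>perms d. scale (\<beta> \<phi>) (eval_word a \<phi>)) = 0)"
proof -
  define W where "W = {w. p w \<noteq> 0}"
  have finW: "finite W" and p0: "p [] = 0" using fp by (auto simp: free_poly_def W_def)
  have Wne: "W \<noteq> {}" using nz by (auto simp: W_def fun_eq_iff)
  define d where "d = Max (length ` W)"
  obtain m where mW: "m \<in> W" and md: "length m = d"
  proof -
    have "d \<in> length ` W" unfolding d_def using finW Wne by (intro Max_in) auto
    then show ?thesis using that by blast
  qed
  have lenW: "length w \<le> d" if "w \<in> W" for w
    using that finW unfolding d_def by auto
  have "m \<noteq> []" using mW p0 by (auto simp: W_def)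
  then have d1: "1 \<le> d" using md by (cases m) auto
  define U where "U = {0..<d}"
  have finU: "finite U" and cardU: "card U = d" by (auto simp: U_def)
  define \<beta> where "\<beta> \<phi> = (-1::'f) ^ d * p (map (nth m) \<phi>)" for \<phi>
  have b0: "\<beta> [0..<d] \<noteq> 0"
  proof -
    have "map (nth m) [0..<d] = m" using md map_nth by metis
    then show ?thesis using mW by (simp add: \<beta>_def W_def)
  qed
  have "(\<Sum>\<phi>\<in>perms d. scale (\<beta> \<phi>) (eval_word a \<phi>)) = 0" for a
  proof -
    define s where "s S = (\<lambda>i. \<Sum>q\<in>{q\<in>S. m ! q = i}. a q)" for S
    define E where "E = eval_word a"
    have h1: "(\<Sum>w\<in>W. scale (p w) (\<Sum>\<phi>\<in>Phi m S w. E \<phi>)) = 0" if "S \<subseteq> U" for S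
    proof -
      have fS: "finite S" using that finU finite_subset by blast
      have "eval_poly scale (s S) p = 0" using pid by blast
      then show ?thesis unfolding eval_poly_def W_def[symmetric] s_def E_def expand[OF fS] .
    qed
    have PhiS: "Phi m S w = {\<phi>\<in>Phi m U w. set \<phi> \<subseteq> S}" if "S \<subseteq> U" for S w
      using that by (auto simp: Phi_def)
    have finPow: "finite (Pow U)" using finU by simp
    have "0 = (\<Sum>S\<in>Pow U. scale ((-1)^card S) (\<Sum>w\<in>W. scale (p w) (\<Sum>\<phi>\<in>Phi m S w. E \<phi>)))"
      using h1 by (simp add: sum.neutral)
    also have "\<dots> = (\<Sum>S\<in>Pow U. \<Sum>w\<in>W. \<Sum>\<phi>\<in>{\<phi>\<in>Phi m U w. set \<phi> \<subseteq> S}. scale ((-1)^card S * p w) (E \<phi>))"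
    proof (intro sum.cong refl)
      fix S assume "S \<in> Pow U"
      then have "S \<subseteq> U" by simp
      then have e: "\<And>w. Phi m S w = {\<phi>\<in>Phi m U w. set \<phi> \<subseteq> S}" by (rule PhiS)
      show "scale ((-1)^card S) (\<Sum>w\<in>W. scale (p w) (\<Sum>\<phi>\<in>Phi m S w. E \<phi>))
          = (\<Sum>w\<in>W. \<Sum>\<phi>\<in>{\<phi>\<in>Phi m U w. set \<phi> \<subseteq> S}. scale ((-1)^card S * p w) (E \<phi>))"
        unfolding e by (simp add: scale_sum_right)
    qed
    also have "\<dots> = (\<Sum>w\<in>W. \<Sum>S\<in>Pow U. \<Sum>\<phi>\<in>{\<phi>\<in>Phi m U w. set \<phi> \<subseteq> S}. scale ((-1)^card S * p w) (E \<phi>))"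
      by (rule sum.swap)
    also have "\<dots> = (\<Sum>w\<in>W. \<Sum>\<phi>\<in>Phi m U w. \<Sum>S\<in>{S\<in>Pow U. set \<phi> \<subseteq> S}. scale ((-1)^card S * p w) (E \<phi>))"
      by (intro sum.cong refl sum.swap_restrict finPow finite_Phi finU)
    also have "\<dots> = (\<Sum>w\<in>W. \<Sum>\<phi>\<in>Phi m U w. scale ((\<Sum>S | S \<subseteq> U \<and> set \<phi> \<subseteq> S. (-1)^card S) * p w) (E \<phi>))"
      by (intro sum.cong refl) (simp add: scale_sum_left sum_distrib_right)
    also have "\<dots> = (\<Sum>w\<in>W. \<Sum>\<phi>\<in>Phi m U w. scale (if set \<phi> = U then \<beta> \<phi> else 0) (E \<phi>))"
    proof (intro sum.cong refl)
      fix w \<phi> assume "w \<in> W" "\<phi> \<in> Phi m U w"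
      then have "set \<phi> \<subseteq> U" "map (nth m) \<phi> = w" by (auto simp: Phi_def)
      then show "scale ((\<Sum>S | S \<subseteq> U \<and> set \<phi> \<subseteq> S. (-1)^card S) * p w) (E \<phi>)
          = scale (if set \<phi> = U then \<beta> \<phi> else 0) (E \<phi>)"
        by (simp add: alt_sum[OF finU] cardU \<beta>_def)
    qed
    also have "\<dots> = (\<Sum>w\<in>W. \<Sum>\<phi>\<in>{\<phi>\<in>Phi m U w. set \<phi> = U}. scale (\<beta> \<phi>) (E \<phi>))"
      by (intro sum.cong refl sum.mono_neutral_cong_right finite_Phi finU) auto
    also have "\<dots> = (\<Sum>w\<in>W. \<Sum>\<phi>\<in>{\<phi>\<in>{\<phi>\<in>perms d. map (nth m) \<phi> \<in> W}. map (nth m) \<phi> = w}. scale (\<beta> \<phi>) (E \<phi>))"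
    proof (intro sum.cong refl)
      fix w assume wW: "w \<in> W"
      show "{\<phi>\<in>Phi m U w. set \<phi> = U} = {\<phi>\<in>{\<phi>\<in>perms d. map (nth m) \<phi> \<in> W}. map (nth m) \<phi> = w}"
      proof (intro set_eqI iffI)
        fix \<phi> assume "\<phi> \<in> {\<phi>\<in>Phi m U w. set \<phi> = U}"
        then have A: "\<phi> \<in> Phi m U w" "set \<phi> = U" by auto
        then have "length \<phi> \<le> d" using lenW[OF wW] by (auto simp: Phi_def)
        moreover have "card (set \<phi>) = d" using A cardU by simp
        ultimately have "distinct \<phi>" using card_length[of \<phi>] card_distinct[of \<phi>] by linarith
        then have "\<phi> \<in> perms d" using A by (auto simp: perms_def U_def)
        moreover have "map (nth m) \<phi> = w" using A by (auto simp: Phi_def)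
        ultimately show "\<phi> \<in> {\<phi>\<in>{\<phi>\<in>perms d. map (nth m) \<phi> \<in> W}. map (nth m) \<phi> = w}"
          using wW by simp
      next
        fix \<phi> assume "\<phi> \<in> {\<phi>\<in>{\<phi>\<in>perms d. map (nth m) \<phi> \<in> W}. map (nth m) \<phi> = w}"
        then have A: "\<phi> \<in> perms d" "map (nth m) \<phi> = w" by auto
        then have "length \<phi> = d" using distinct_card[of \<phi>] by (auto simp: perms_def)
        then show "\<phi> \<in> {\<phi>\<in>Phi m U w. set \<phi> = U}" using A by (auto simp: Phi_def perms_def U_def)
      qed
    qed
    also have "\<dots> = (\<Sum>\<phi>\<in>{\<phi>\<in>perms d. map (nth m) \<phi> \<in> W}. scale (\<beta> \<phi>) (E \<phi>))"
      by (rule sum.group) (use finW finite_perms in auto)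
    also have "\<dots> = (\<Sum>\<phi>\<in>perms d. scale (\<beta> \<phi>) (E \<phi>))"
      by (rule sum.mono_neutral_left) (auto simp: finite_perms \<beta>_def W_def)
    finally show ?thesis unfolding E_def by simp
  qed
  then show ?thesis using d1 b0 by blast
qed

end

definition cutblk :: "'v list \<Rightarrow> nat list \<Rightarrow> nat \<Rightarrow> 'v list" where
  "cutblk u c j = drop (c!j) (take (c!(Suc j)) u)"

definition uphi :: "'v list \<Rightarrow> nat list \<Rightarrow> nat list \<Rightarrow> 'v list" where
  "uphi u c \<phi> = take (c!0) u @ concat (map (cutblk u c) \<phi>)"

lemma cut_concat:
  assumes "sorted_wrt (<) c" "k < length c"
  shows "take (c!0) u @ concat (map (cutblk u c) [0..<k]) = take (c!k) u"
  using assms(2)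
proof (induction k)
  case 0 then show ?case by simp
next
  case (Suc k)
  have le: "c!k \<le> c!(Suc k)" using sorted_wrt_nth_less[OF assms(1), of k "Suc k"] Suc.prems by simp
  have "take (c!0) u @ concat (map (cutblk u c) [0..<Suc k])
      = take (c!k) u @ drop (c!k) (take (c!(Suc k)) u)"
    using Suc by (simp add: cutblk_def[of u c k])
  also have "\<dots> = take (c!k) (take (c!(Suc k)) u) @ drop (c!k) (take (c!(Suc k)) u)"
    using le by (simp add: min_def)
  also have "\<dots> = take (c!(Suc k)) u" by (rule append_take_drop_id)
  finally show ?case .
qed

lemma cutblk_Cons:
  assumes "c!j < c!(Suc j)" "c!(Suc j) \<le> length u"
  shows "cutblk u c j = u ! (c!j) # drop (Suc (c!j)) (take (c!(Suc j)) u)"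
proof -
  have "c!j < length (take (c!(Suc j)) u)" using assms by simp
  then show ?thesis unfolding cutblk_def
    by (metis Cons_nth_drop_Suc assms(1) nth_take)
qed

lemma set_concat_perm:
  "set \<phi> = set \<psi> \<Longrightarrow> set (concat (map f \<phi>)) = set (concat (map f \<psi>))"
  by auto

lemma length_concat_perm:
  "distinct \<phi> \<Longrightarrow> distinct \<psi> \<Longrightarrow> set \<phi> = set \<psi> \<Longrightarrow>
   length (concat (map f \<phi>)) = length (concat (map f \<psi>))"
  by (simp add: length_concat sum_list_distinct_conv_sum_set)

lemma concat_split: "xs = A @ b # B \<Longrightarrow> concat (map f xs) = concat (map f A) @ f b @ concat (map f B)"
  by simp

definition bad :: "nat \<Rightarrow> svar list \<Rightarrow> bool" where
  "bad d u \<longleftrightarrow> (\<exists>I. length I = d \<and> sorted_wrt (<) I \<and> (\<forall>i\<in>set I. i < length u) \<and>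
                    sorted_wrt (<) (map (\<lambda>i. vidx (u!i)) I))"

definition key :: "nat \<Rightarrow> svar list \<Rightarrow> nat list" where
  "key n u = map (\<lambda>x. n - vidx x) u"

lemma perm_first_diff:
  assumes "\<phi> \<in> perms d" "\<phi> \<noteq> [0..<d]"
  obtains k where "k < d" "take k \<phi> = [0..<k]" "k < \<phi>!k" "\<phi>!k < d" "length \<phi> = d"
proof -
  have len: "length \<phi> = d" using assms(1) distinct_card[of \<phi>] by (auto simp: perms_def)
  have "\<exists>k<d. \<phi>!k \<noteq> k"
  proof (rule ccontr)
    assume "\<not> ?thesis"
    then have "\<phi> = [0..<d]" by (intro nth_equalityI) (auto simp: len)
    then show False using assms by simp
  qed
  then obtain k where k: "k < d" "\<phi>!k \<noteq> k" and kmin: "\<And>j. j < k \<Longrightarrow> \<phi>!j = j"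
    using exists_least_iff[of "\<lambda>k. k < d \<and> \<phi>!k \<noteq> k"] by (metis order.strict_trans)
  have tk: "take k \<phi> = [0..<k]" by (intro nth_equalityI) (use k len kmin in auto)
  have ltd: "\<phi>!k < d" using assms(1) k len nth_mem[of k \<phi>] by (auto simp: perms_def)
  have "k < \<phi>!k"
  proof (rule ccontr)
    assume "\<not> k < \<phi>!k"
    then have lt: "\<phi>!k < k" using k by simp
    then have "\<phi>!(\<phi>!k) = \<phi>!k" using kmin by simp
    then have "\<phi>!k = k" using assms(1) lt k len unfolding perms_def
      by (metis nth_eq_iff_index_eq order.strict_trans mem_Collect_eq)
    then show False using k by simp
  qed
  then show ?thesis using that k tk ltd len by blast
qed

lemma bad_decomp:
  assumes mw: "u \<in> multilinear_words n" and bd: "bad d u" and d1: "1 \<le> d"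
  obtains c where
    "uphi u c [0..<d] = u"
    "\<And>\<phi>. \<phi> \<in> perms d \<Longrightarrow> uphi u c \<phi> \<in> multilinear_words n"
    "\<And>\<phi>. \<phi> \<in> perms d \<Longrightarrow> \<phi> \<noteq> [0..<d] \<Longrightarrow> (key n (uphi u c \<phi>), key n u) \<in> lenlex less_than"
    "\<And>j. j < d \<Longrightarrow> cutblk u c j \<noteq> []"
proof -
  obtain I where I: "length I = d" "sorted_wrt (<) I" "\<forall>i\<in>set I. i < length u"
      "sorted_wrt (<) (map (\<lambda>i. vidx (u!i)) I)"
    using bd by (auto simp: bad_def)
  define c where "c = I @ [length u]"
  have sc: "sorted_wrt (<) c" using I by (auto simp: c_def sorted_wrt_append)
  have lc: "length c = Suc d" using I by (simp add: c_def)
  have cd: "c!d = length u" using I by (simp add: c_def nth_append)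
  have cI: "c!j = I!j" if "j < d" for j using that I by (simp add: c_def nth_append)
  have cle: "c!j \<le> length u" if "j \<le> d" for j
  proof (cases "j = d")
    case True then show ?thesis using cd by simp
  next
    case False then have "j < d" using that by simp
    then show ?thesis using cI I(1,3) nth_mem[of j I] by fastforce
  qed
  have clt: "c!j < c!(Suc j)" if "j < d" for j
    using sorted_wrt_nth_less[OF sc, of j "Suc j"] that lc by simp
  define blk where "blk = cutblk u c"
  have blkC: "blk j = u ! (c!j) # drop (Suc (c!j)) (take (c!(Suc j)) u)" if "j < d" for j
    unfolding blk_def using that by (intro cutblk_Cons clt cle) auto
  have u_eq: "uphi u c [0..<d] = u"
    unfolding uphi_def using cut_concat[OF sc, of d u] lc cd by simp
  have lenu: "length u = n" and setu: "vidx ` set u = {1..n}" using mw by (auto simp: multilinear_words_def)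
  have setphi: "set (uphi u c \<phi>) = set u" and lenphi: "length (uphi u c \<phi>) = length u"
    if "\<phi> \<in> perms d" for \<phi>
  proof -
    have "set \<phi> = set [0..<d]" "distinct \<phi>" using that by (auto simp: perms_def)
    then have "set (concat (map (cutblk u c) \<phi>)) = set (concat (map (cutblk u c) [0..<d]))"
      "length (concat (map (cutblk u c) \<phi>)) = length (concat (map (cutblk u c) [0..<d]))"
      by (intro set_concat_perm length_concat_perm; simp)+
    then show "set (uphi u c \<phi>) = set u" "length (uphi u c \<phi>) = length u"
      using u_eq unfolding uphi_def by (metis length_append set_append)+
  qed
  have mwphi: "uphi u c \<phi> \<in> multilinear_words n" if "\<phi> \<in> perms d" for \<phi>
    using setphi[OF that] lenphi[OF that] lenu setu by (simp add: multilinear_words_def)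
  have vle: "vidx (u!i) \<le> n" if "i < length u" for i
    using setu nth_mem[OF that] by fastforce
  have lexs: "(key n (uphi u c \<phi>), key n u) \<in> lenlex less_than"
    if ph: "\<phi> \<in> perms d" "\<phi> \<noteq> [0..<d]" for \<phi>
  proof -
    obtain k where k: "k < d" "take k \<phi> = [0..<k]" "k < \<phi>!k" "\<phi>!k < d" "length \<phi> = d"
      using perm_first_diff[OF ph] by blast
    define X where "X = take (c!0) u @ concat (map blk [0..<k])"
    have phisplit: "\<phi> = [0..<k] @ (\<phi>!k) # drop (Suc k) \<phi>"
      using id_take_nth_drop[of k \<phi>] k(1,5) unfolding k(2) by simp
    have "[0..<d] = [0..<k] @ [k..<d]" using upt_add_eq_append[of 0 k "d - k"] k(1) by simp
    moreover have "[k..<d] = k # [Suc k..<d]" using upt_conv_Cons k(1) by simp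
    ultimately have idsplit: "[0..<d] = [0..<k] @ k # [Suc k..<d]" by simp
    have cphi: "concat (map blk \<phi>) = concat (map blk [0..<k]) @ blk (\<phi>!k) @ concat (map blk (drop (Suc k) \<phi>))"
      using concat_split[OF phisplit] .
    have cid: "concat (map blk [0..<d]) = concat (map blk [0..<k]) @ blk k @ concat (map blk [Suc k..<d])"
      using concat_split[OF idsplit] .
    define x where "x = n - vidx (u ! (c!(\<phi>!k)))"
    define y where "y = n - vidx (u ! (c!k))"
    have e1: "key n (uphi u c \<phi>) = key n X @ x # key n (drop (Suc (c!(\<phi>!k))) (take (c!(Suc (\<phi>!k))) u) @ concat (map blk (drop (Suc k) \<phi>)))"
      using blkC[OF k(4)] cphi by (simp add: uphi_def X_def key_def x_def blk_def[symmetric])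
    have e2: "key n u = key n X @ y # key n (drop (Suc (c!k)) (take (c!(Suc k)) u) @ concat (map blk [Suc k..<d]))"
    proof -
      have "key n u = key n (uphi u c [0..<d])" using u_eq by simp
      also have "\<dots> = key n X @ y # key n (drop (Suc (c!k)) (take (c!(Suc k)) u) @ concat (map blk [Suc k..<d]))"
        using blkC[OF k(1)] cid by (simp add: uphi_def X_def key_def y_def blk_def[symmetric])
      finally show ?thesis .
    qed
    have "vidx (u!(I!k)) < vidx (u!(I!(\<phi>!k)))"
      using sorted_wrt_nth_less[OF I(4), of k "\<phi>!k"] k I(1) by simp
    moreover have "I!(\<phi>!k) < length u" using I k nth_mem[of "\<phi>!k" I] by auto
    ultimately have "x < y" unfolding x_def y_def using cI k vle by (simp add: less_diff_conv2 le_diff_conv2)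
    moreover have "length (key n (uphi u c \<phi>)) = length (key n u)"
      using lenphi[OF ph(1)] by (simp add: key_def)
    ultimately show ?thesis
      unfolding lenlex_conv lex_conv using e1 e2 by auto
  qed
  have ne: "cutblk u c j \<noteq> []" if "j < d" for j using blkC[OF that] by (simp add: blk_def)
  show ?thesis using that u_eq mwphi lexs ne by blast
qed

interpretation PV: vector_space "pscale :: 'f::field \<Rightarrow> ('v list \<Rightarrow> 'f) \<Rightarrow> ('v list \<Rightarrow> 'f)"
  by (rule vs_pscale)

definition delta :: "'v list \<Rightarrow> ('v list \<Rightarrow> 'f::field)" where
  "delta w = (\<lambda>v. if v = w then 1 else 0)"

lemma sum_fun_apply: "(sum f A) x = (\<Sum>a\<in>A. f a x)"
proof (cases "finite A")
  case True then show ?thesis by (induction A rule: finite_induct) auto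
next
  case False then show ?thesis by simp
qed

lemma finite_MW: "finite (multilinear_words n)"
proof -
  define X where "X = (\<lambda>(t,b,j). if t then Y b j else Z b j) ` (UNIV \<times> UNIV \<times> {0..n})"
  have "finite X" unfolding X_def by simp
  then have "finite {w. set w \<subseteq> X \<and> length w = n}" by (rule finite_lists_length_eq)
  moreover have "multilinear_words n \<subseteq> {w. set w \<subseteq> X \<and> length w = n}"
  proof safe
    fix w x assume w: "w \<in> multilinear_words n" and x: "x \<in> set w"
    then have "vidx x \<in> {1..n}" unfolding multilinear_words_def by auto
    then show "x \<in> X"
    proof (cases x)
      case (Y b j)
      then have "x = (\<lambda>(t,b,j). if t then Y b j else Z b j) (True, b, j)" by simp
      moreover have "(True, b, j) \<in> (UNIV :: bool set) \<times> (UNIV :: bool set) \<times> {0..n}" using \<open>vidx x \<in> {1..n}\<close> Y by simp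
      ultimately show ?thesis unfolding X_def by (rule image_eqI)
    next
      case (Z b j)
      then have "x = (\<lambda>(t,b,j). if t then Y b j else Z b j) (False, b, j)" by simp
      moreover have "(False, b, j) \<in> (UNIV :: bool set) \<times> (UNIV :: bool set) \<times> {0..n}" using \<open>vidx x \<in> {1..n}\<close> Z by simp
      ultimately show ?thesis unfolding X_def by (rule image_eqI)
    qed
  next
    fix w assume "w \<in> multilinear_words n" then show "length w = n" by (simp add: multilinear_words_def)
  qed
  ultimately show ?thesis by (rule rev_finite_subset)
qed

lemma P_in_span: "P_grs n \<subseteq> PV.span (delta ` multilinear_words n)"
proof
  fix p :: "svar list \<Rightarrow> 'f::field" assume p: "p \<in> P_grs n"
  have "p = (\<Sum>w\<in>multilinear_words n. pscale (p w) (delta w))"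
  proof
    fix v
    have "(\<Sum>w\<in>multilinear_words n. pscale (p w) (delta w)) v = (\<Sum>w\<in>multilinear_words n. if v = w then p w else 0)"
      by (simp add: sum_fun_apply pscale_def delta_def if_distrib cong: if_cong)
    also have "\<dots> = p v" using p finite_MW[of n] by (auto simp: P_grs_def)
    finally show "p v = (\<Sum>w\<in>multilinear_words n. pscale (p w) (delta w)) v" by simp
  qed
  also have "\<dots> \<in> PV.span (delta ` multilinear_words n)"
    by (intro PV.span_sum PV.span_scale PV.span_base) auto
  finally show "p \<in> PV.span (delta ` multilinear_words n)" .
qed

lemma dim_bound:
  fixes Q :: "(svar list \<Rightarrow> 'f::field) set"
  assumes G: "G \<subseteq> multilinear_words n"
    and red: "\<And>u. u \<in> multilinear_words n \<Longrightarrow> delta u \<in> PV.span (delta ` G \<union> Q)"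
    and QP: "Q \<subseteq> P_grs n"
  shows "PV.dim (P_grs n :: (svar list \<Rightarrow> 'f) set) \<le> card G + PV.dim Q"
proof -
  obtain B where B: "B \<subseteq> Q" "PV.independent B" "Q \<subseteq> PV.span B" "card B = PV.dim Q"
    using PV.basis_exists by blast
  have finB: "finite B"
    using PV.independent_span_bound[OF finite_imageI[OF finite_MW] B(2)] B(1) QP P_in_span[of n] by blast
  have finG: "finite G" using G finite_MW finite_subset by blast
  have "Q \<subseteq> PV.span (delta ` G \<union> B)" using B(3) PV.span_mono[of B "delta ` G \<union> B"] by blast
  moreover have "delta ` G \<subseteq> PV.span (delta ` G \<union> B)" using PV.span_superset[of "delta ` G \<union> B"] by blast
  ultimately have "delta ` G \<union> Q \<subseteq> PV.span (delta ` G \<union> B)" by blast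
  then have s1: "PV.span (delta ` G \<union> Q) \<subseteq> PV.span (delta ` G \<union> B)"
    by (rule PV.span_minimal) simp
  have "delta ` multilinear_words n \<subseteq> PV.span (delta ` G \<union> Q)" using red by blast
  then have "PV.span (delta ` multilinear_words n) \<subseteq> PV.span (delta ` G \<union> Q)"
    by (rule PV.span_minimal) simp
  then have Psp: "(P_grs n :: (svar list \<Rightarrow> 'f) set) \<subseteq> PV.span (delta ` G \<union> B)"
    using P_in_span[of n] s1 by blast
  then have "PV.dim (P_grs n :: (svar list \<Rightarrow> 'f) set) \<le> card (delta ` G \<union> B)"
    using PV.dim_le_card[OF Psp] finB finG by simp
  moreover have "card (delta ` G \<union> B) \<le> card (delta ` G :: (svar list \<Rightarrow> 'f) set) + card B" by (rule card_Un_le)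
  moreover have "card (delta ` G :: (svar list \<Rightarrow> 'f) set) \<le> card G" using card_image_le[OF finG, of delta] by simp
  ultimately show ?thesis using B(4) by linarith
qed

context nalg
begin

lemma reduce:
  assumes d1: "1 \<le> d" and b0: "\<beta> [0..<d] \<noteq> 0"
    and hML: "\<forall>a. (\<Sum>\<phi>\<in>perms d. scale (\<beta> \<phi>) (eval_word a \<phi>)) = 0"
    and mw0: "u \<in> multilinear_words n"
  shows "(delta u :: svar list \<Rightarrow> 'f) \<in> PV.span (delta ` {u \<in> multilinear_words n. \<not> bad d u}
            \<union> (P_grs n \<inter> sharp_superids scale Ag star))"
proof -
  define Sp where "Sp = PV.span ((delta :: svar list \<Rightarrow> svar list \<Rightarrow> 'f) ` {u \<in> multilinear_words n. \<not> bad d u}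
            \<union> (P_grs n \<inter> sharp_superids scale Ag star))"
  define R where "R = inv_image (lenlex less_than) (key n)"
  have wf: "wf R" unfolding R_def by (intro wf_inv_image wf_lenlex wf_less_than)
  have "u \<in> multilinear_words n \<longrightarrow> delta u \<in> Sp"
  proof (induction u rule: wf_induct[OF wf])
    case (1 u)
    show ?case
    proof
      assume mw: "u \<in> multilinear_words n"
      show "delta u \<in> Sp"
      proof (cases "bad d u")
        case False then show ?thesis using mw unfolding Sp_def by (intro PV.span_base) auto
      next
        case True
        obtain c where c1: "uphi u c [0..<d] = u"
          and c2: "\<And>\<phi>. \<phi> \<in> perms d \<Longrightarrow> uphi u c \<phi> \<in> multilinear_words n"
          and c3: "\<And>\<phi>. \<phi> \<in> perms d \<Longrightarrow> \<phi> \<noteq> [0..<d] \<Longrightarrow> (key n (uphi u c \<phi>), key n u) \<in> lenlex less_than"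
          and c4: "\<And>j. j < d \<Longrightarrow> cutblk u c j \<noteq> []"
          using bad_decomp[OF mw True d1] by blast
        define g where "g = (\<Sum>\<phi>\<in>perms d. pscale (\<beta> \<phi>) (delta (uphi u c \<phi>)) :: svar list \<Rightarrow> 'f)"
        have gval: "g v = (\<Sum>\<phi>\<in>perms d. if v = uphi u c \<phi> then \<beta> \<phi> else 0)" for v
          by (simp add: g_def sum_fun_apply pscale_def delta_def if_distrib cong: if_cong)
        have gsupp: "{v. g v \<noteq> 0} \<subseteq> uphi u c ` perms d"
        proof
          fix v assume "v \<in> {v. g v \<noteq> 0}"
          then have "(\<Sum>\<phi>\<in>perms d. if v = uphi u c \<phi> then \<beta> \<phi> else 0) \<noteq> 0" using gval by simp
          then obtain \<phi> where "\<phi> \<in> perms d" "(if v = uphi u c \<phi> then \<beta> \<phi> else 0) \<noteq> 0"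
            by (rule sum.not_neutral_contains_not_neutral)
          then have "\<phi> \<in> perms d" "v = uphi u c \<phi>" by (auto split: if_splits)
          then show "v \<in> uphi u c ` perms d" by blast
        qed
        have blkne: "\<forall>j\<in>set \<phi>. cutblk u c j \<noteq> []" if "\<phi> \<in> perms d" for \<phi>
          using that c4 by (auto simp: perms_def)
        have catne: "concat (map (cutblk u c) \<phi>) \<noteq> []" if "\<phi> \<in> perms d" for \<phi>
        proof -
          have "0 \<in> set \<phi>" using that d1 by (auto simp: perms_def)
          then show ?thesis using blkne[OF that] by auto
        qed
        have ne: "uphi u c \<phi> \<noteq> []" if "\<phi> \<in> perms d" for \<phi>
          using catne[OF that] by (simp add: uphi_def)
        have gP: "g \<in> P_grs n"
          using gsupp c2 by (auto simp: P_grs_def)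
        have gfree: "free_poly g"
        proof -
          have "finite {v. g v \<noteq> 0}" using gsupp finite_perms finite_subset by blast
          moreover have "g [] = 0" using gsupp ne by fastforce
          ultimately show ?thesis by (simp add: free_poly_def)
        qed
        have geval: "eval_poly scale s g = 0" for s
        proof -
          define pre where "pre = take (c!0) u"
          define a where "a = (\<lambda>j. eval_word s (cutblk u c j))"
          have ev: "eval_word s (uphi u c \<phi>) = (if pre = [] then eval_word a \<phi> else eval_word s pre * eval_word a \<phi>)"
            if "\<phi> \<in> perms d" for \<phi>
            using eval_word_concat[OF blkne[OF that], of s] eval_word_append[where s=s and xs=pre, OF _ catne[OF that]]
            by (auto simp: uphi_def pre_def[symmetric] a_def)
          have "eval_poly scale s g = (\<Sum>w\<in>uphi u c ` perms d. scale (g w) (eval_word s w))"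
            by (rule eval_poly_alt) (use gsupp finite_perms in auto)
          also have "\<dots> = (\<Sum>w\<in>uphi u c ` perms d. \<Sum>\<phi>\<in>perms d. scale (if w = uphi u c \<phi> then \<beta> \<phi> else 0) (eval_word s w))"
            by (simp add: gval scale_sum_left)
          also have "\<dots> = (\<Sum>\<phi>\<in>perms d. \<Sum>w\<in>uphi u c ` perms d. if w = uphi u c \<phi> then scale (\<beta> \<phi>) (eval_word s (uphi u c \<phi>)) else 0)"
            by (subst sum.swap) (intro sum.cong refl; simp)
          also have "\<dots> = (\<Sum>\<phi>\<in>perms d. scale (\<beta> \<phi>) (eval_word s (uphi u c \<phi>)))"
            by (intro sum.cong refl) (simp add: sum.delta finite_perms)
          also have "\<dots> = 0"
          proof (cases "pre = []")
            case True
            then show ?thesis using hML ev by (simp cong: sum.cong)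
          next
            case False
            then have "(\<Sum>\<phi>\<in>perms d. scale (\<beta> \<phi>) (eval_word s (uphi u c \<phi>)))
                = (\<Sum>\<phi>\<in>perms d. eval_word s pre * scale (\<beta> \<phi>) (eval_word a \<phi>))"
              using ev by (intro sum.cong refl) (simp add: multR)
            also have "\<dots> = eval_word s pre * (\<Sum>\<phi>\<in>perms d. scale (\<beta> \<phi>) (eval_word a \<phi>))"
              by (simp add: sum_distrib_left)
            also have "\<dots> = 0" using hML by simp
            finally show ?thesis .
          qed
          finally show ?thesis .
        qed
        have gQ: "g \<in> P_grs n \<inter> sharp_superids scale Ag star"
          using gP gfree geval by (simp add: sharp_superids_def)
        define rest where "rest = (\<Sum>\<phi>\<in>perms d - {[0..<d]}. pscale (\<beta> \<phi>) (delta (uphi u c \<phi>)) :: svar list \<Rightarrow> 'f)"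
        have IHs: "delta (uphi u c \<phi>) \<in> Sp" if "\<phi> \<in> perms d - {[0..<d]}" for \<phi>
        proof -
          have "\<phi> \<in> perms d" "\<phi> \<noteq> [0..<d]" using that by auto
          then have "(uphi u c \<phi>, u) \<in> R" "uphi u c \<phi> \<in> multilinear_words n"
            using c2 c3 by (auto simp: R_def)
          then show "delta (uphi u c \<phi>) \<in> Sp" using "1.IH" by blast
        qed
        have restS: "rest \<in> Sp"
          unfolding rest_def using IHs unfolding Sp_def by (intro PV.span_sum PV.span_scale) auto
        have idp: "[0..<d] \<in> perms d" by (simp add: perms_def)
        have "g = pscale (\<beta> [0..<d]) (delta u) + rest"
          unfolding g_def rest_def by (simp add: sum.remove[OF finite_perms idp] c1)
        then have "delta u = pscale (inverse (\<beta> [0..<d])) (g - rest)"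
          using b0 by (auto simp: fun_eq_iff pscale_def)
        moreover have "g \<in> Sp" using gQ unfolding Sp_def by (intro PV.span_base) auto
        ultimately show ?thesis using restS unfolding Sp_def by (simp add: PV.span_scale PV.span_diff)
      qed
    qed
  qed
  then show ?thesis using mw0 unfolding Sp_def by blast
qed

end

lemma chain_determined:
  fixes xs ys :: "nat list" and Lx Ly :: "nat \<Rightarrow> nat"
  assumes dx: "distinct xs" and dy: "distinct ys" and len: "length xs = length ys"
    and st: "set xs = set ys"
    and chx: "\<And>j k. j < k \<Longrightarrow> k < length xs \<Longrightarrow> Lx j = Lx k \<Longrightarrow> xs!k < xs!j"
    and chy: "\<And>j k. j < k \<Longrightarrow> k < length ys \<Longrightarrow> Ly j = Ly k \<Longrightarrow> ys!k < ys!j"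
    and LL: "\<And>k. k < length xs \<Longrightarrow> Lx k = Ly k"
    and MM: "\<And>j k. j < length xs \<Longrightarrow> k < length ys \<Longrightarrow> xs!j = ys!k \<Longrightarrow> Lx j = Ly k"
  shows "xs = ys"
proof (rule nth_equalityI[OF len])
  fix k assume k: "k < length xs"
  define c where "c = Lx k"
  define P where "P = {j. j < length xs \<and> Lx j = c}"
  have P': "P = {j. j < length ys \<and> Ly j = c}" using LL len by (auto simp: P_def)
  define V where "V = (nth xs) ` P"
  have V': "V = (nth ys) ` P"
  proof
    show "V \<subseteq> (nth ys) ` P"
    proof
      fix v assume "v \<in> V"
      then obtain j where j: "j \<in> P" "v = xs!j" by (auto simp: V_def)
      then have "v \<in> set ys" using st by (auto simp: P_def)
      then obtain j' where j': "j' < length ys" "ys!j' = v" by (auto simp: in_set_conv_nth)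
      then have "Ly j' = c" using MM[of j j'] j by (auto simp: P_def)
      then show "v \<in> (nth ys) ` P" using j' P' by auto
    qed
  next
    show "(nth ys) ` P \<subseteq> V"
    proof
      fix v assume "v \<in> (nth ys) ` P"
      then obtain j where j: "j \<in> P" "v = ys!j" by auto
      then have "v \<in> set xs" using st P' by auto
      then obtain j' where j': "j' < length xs" "xs!j' = v" by (auto simp: in_set_conv_nth)
      then have "Lx j' = c" using MM[of j' j] j P' by auto
      then show "v \<in> V" using j' by (auto simp: V_def P_def)
    qed
  qed
  have finV: "finite V" by (simp add: V_def P_def)
  define cnt where "cnt v = card {w\<in>V. v < w}" for v
  have cnt_x: "cnt (xs!k) = card {j\<in>P. j < k}"
  proof -
    have "bij_betw (nth xs) {j\<in>P. j < k} {w\<in>V. xs!k < w}"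
    proof (rule bij_betwI')
      fix j j' assume "j \<in> {j\<in>P. j < k}" "j' \<in> {j\<in>P. j < k}"
      then show "(xs!j = xs!j') = (j = j')" using dx by (auto simp: P_def nth_eq_iff_index_eq)
    next
      fix j assume "j \<in> {j\<in>P. j < k}"
      then show "xs!j \<in> {w\<in>V. xs!k < w}" using chx[of j k] k by (auto simp: V_def P_def c_def)
    next
      fix w assume "w \<in> {w\<in>V. xs!k < w}"
      then obtain j where j: "j \<in> P" "w = xs!j" "xs!k < xs!j" by (auto simp: V_def)
      have "j \<noteq> k" using j by auto
      moreover have "\<not> k < j" using chx[of k j] j k by (auto simp: P_def c_def)
      ultimately show "\<exists>j\<in>{j\<in>P. j < k}. w = xs!j" using j by auto
    qed
    then show ?thesis unfolding cnt_def by (simp add: bij_betw_same_card)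
  qed
  have ky: "k < length ys" using k len by simp
  have kP: "k \<in> P" using k by (simp add: P_def c_def)
  have cnt_y: "cnt (ys!k) = card {j\<in>P. j < k}"
  proof -
    have "bij_betw (nth ys) {j\<in>P. j < k} {w\<in>V. ys!k < w}"
    proof (rule bij_betwI')
      fix j j' assume "j \<in> {j\<in>P. j < k}" "j' \<in> {j\<in>P. j < k}"
      then show "(ys!j = ys!j') = (j = j')" using dy P' by (auto simp: nth_eq_iff_index_eq)
    next
      fix j assume "j \<in> {j\<in>P. j < k}"
      then show "ys!j \<in> {w\<in>V. ys!k < w}" using chy[of j k] ky kP P' V' by auto
    next
      fix w assume "w \<in> {w\<in>V. ys!k < w}"
      then obtain j where j: "j \<in> P" "w = ys!j" "ys!k < ys!j" using V' by auto
      have "j \<noteq> k" using j by auto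
      moreover have "\<not> k < j" using chy[of k j] j ky kP P' by auto
      ultimately show "\<exists>j\<in>{j\<in>P. j < k}. w = ys!j" using j by auto
    qed
    then show ?thesis unfolding cnt_def by (simp add: bij_betw_same_card)
  qed
  have inV: "xs!k \<in> V" "ys!k \<in> V" using kP V' by (auto simp: V_def)
  have mono: "cnt w < cnt v" if "v \<in> V" "w \<in> V" "v < w" for v w
  proof -
    have "{w'\<in>V. w < w'} \<subset> {w'\<in>V. v < w'}" using that by auto
    then show ?thesis unfolding cnt_def using finV by (intro psubset_card_mono) auto
  qed
  show "xs!k = ys!k"
  proof (rule ccontr)
    assume "xs!k \<noteq> ys!k"
    then have "xs!k < ys!k \<or> ys!k < xs!k" by arith
    then show False using mono inV cnt_x cnt_y by (metis less_irrefl)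
  qed
qed

definition incs :: "nat list \<Rightarrow> nat \<Rightarrow> nat list set" where
  "incs xs k = {I. I \<noteq> [] \<and> last I = k \<and> sorted_wrt (<) I \<and> sorted_wrt (<) (map (nth xs) I)}"

definition lab :: "nat list \<Rightarrow> nat \<Rightarrow> nat" where
  "lab xs k = Max (length ` incs xs k)"

lemma sorted_le_last:
  fixes L :: "'a::linorder list"
  assumes "sorted_wrt (<) L" "L \<noteq> []" "x \<in> set L" shows "x \<le> last L"
proof -
  have "L = butlast L @ [last L]" using assms(2) by simp
  then have "sorted_wrt (<) (butlast L @ [last L])" using assms(1) by simp
  then have "\<forall>y\<in>set (butlast L). y < last L" by (simp add: sorted_wrt_append)
  moreover have "x \<in> set (butlast L) \<or> x = last L" using assms(2,3)
    by (metis \<open>L = butlast L @ [last L]\<close> rotate1.simps(2) set_ConsD set_rotate1)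
  ultimately show ?thesis by auto
qed

lemma incs_len: "I \<in> incs xs k \<Longrightarrow> length I \<le> Suc k"
proof -
  assume I: "I \<in> incs xs k"
  then have "set I \<subseteq> {0..k}" using sorted_le_last[of I] by (auto simp: incs_def)
  then have "card (set I) \<le> Suc k" using card_mono[of "{0..k}" "set I"] by simp
  moreover have "distinct I" using I by (auto simp: incs_def strict_sorted_iff)
  ultimately show ?thesis by (simp add: distinct_card)
qed

lemma incs_fin: "finite (length ` incs xs k)"
  by (rule finite_subset[of _ "{..Suc k}"]) (auto dest: incs_len)

lemma incs_single: "[k] \<in> incs xs k" by (simp add: incs_def)

lemma lab_ge1: "1 \<le> lab xs k"
  unfolding lab_def using incs_single[of k xs] incs_fin[of xs k]
  by (metis One_nat_def Max_ge image_eqI length_Cons list.size(3))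

lemma lab_witness: obtains I where "I \<in> incs xs k" "length I = lab xs k"
proof -
  have "lab xs k \<in> length ` incs xs k" unfolding lab_def
    using incs_single[of k xs] incs_fin[of xs k] by (intro Max_in) auto
  then obtain I where "I \<in> incs xs k" "lab xs k = length I" by blast
  then show ?thesis using that by simp
qed

lemma lab_less:
  assumes "j < k" "xs!j < xs!k" shows "lab xs j < lab xs k"
proof -
  obtain I where I: "I \<in> incs xs j" "length I = lab xs j" by (rule lab_witness)
  have ne: "I \<noteq> []" "last I = j" and s1: "sorted_wrt (<) I" and s2: "sorted_wrt (<) (map (nth xs) I)"
    using I by (auto simp: incs_def)
  have "\<forall>x\<in>set I. x < k" using sorted_le_last[OF s1 ne(1)] ne assms(1) by fastforce
  moreover have "\<forall>x\<in>set I. xs!x < xs!k"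
  proof
    fix x assume "x \<in> set I"
    then have "xs!x \<le> last (map (nth xs) I)" using sorted_le_last[OF s2] ne(1) by simp
    also have "\<dots> = xs!j" using ne by (simp add: last_map)
    finally show "xs!x < xs!k" using assms(2) by simp
  qed
  ultimately have "I @ [k] \<in> incs xs k" using s1 s2 by (auto simp: incs_def sorted_wrt_append)
  then have "length (I @ [k]) \<in> length ` incs xs k" by (rule imageI)
  then have "length (I @ [k]) \<le> lab xs k" unfolding lab_def using incs_fin[of xs k] by (intro Max_ge)
  then show ?thesis using I by simp
qed

lemma lab_chain:
  assumes "distinct xs" "j < k" "k < length xs" "lab xs j = lab xs k"
  shows "xs!k < xs!j"
proof -
  have "xs!j \<noteq> xs!k" using assms by (simp add: nth_eq_iff_index_eq)
  moreover have "\<not> xs!j < xs!k"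
  proof
    assume "xs!j < xs!k"
    then have "lab xs j < lab xs k" by (rule lab_less[OF assms(2)])
    then show False using assms(4) by simp
  qed
  ultimately show ?thesis by simp
qed

lemma good_lab:
  assumes good: "\<not> bad d u" and k: "k < length u"
  shows "lab (map vidx u) k < d"
proof (rule ccontr)
  assume "\<not> ?thesis"
  then have dl: "d \<le> lab (map vidx u) k" by simp
  obtain I where I: "I \<in> incs (map vidx u) k" "length I = lab (map vidx u) k" by (rule lab_witness)
  have s1: "sorted_wrt (<) I" and s2: "sorted_wrt (<) (map (nth (map vidx u)) I)" and ne: "I \<noteq> []" "last I = k"
    using I by (auto simp: incs_def)
  have lt: "\<forall>i\<in>set I. i < length u" using sorted_le_last[OF s1 ne(1)] ne k by fastforce
  have eqm: "map (nth (map vidx u)) I = map (\<lambda>i. vidx (u!i)) I" using lt by simp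
  have s2': "sorted_wrt (<) (map (\<lambda>i. vidx (u!i)) I)" using s2 unfolding eqm .
  have s3: "sorted_wrt (<) (map (\<lambda>i. vidx (u!i)) (take d I))"
    using sorted_wrt_take[OF s2', of d] by (simp add: take_map)
  have "bad d u" unfolding bad_def
    apply (rule exI[of _ "take d I"])
    using dl I(2) s1 s3 lt sorted_wrt_take[of "(<)" I d] by (auto dest: in_set_takeD)
  then show False using good by simp
qed

fun kind :: "svar \<Rightarrow> bool \<times> bool" where
  "kind (Y b j) = (True, b)"
| "kind (Z b j) = (False, b)"

lemma kind_inj: "kind x = kind y \<Longrightarrow> vidx x = vidx y \<Longrightarrow> x = y"
  by (cases x; cases y) auto

definition posn :: "svar list \<Rightarrow> nat \<Rightarrow> nat" where
  "posn u v = (THE i. i < length u \<and> vidx (u!i) = v)"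

lemma MW_distinct: "u \<in> multilinear_words n \<Longrightarrow> distinct (map vidx u)"
  by (rule card_distinct) (simp add: multilinear_words_def)

lemma posn_unique:
  assumes "u \<in> multilinear_words n" "i < length u" "vidx (u!i) = v"
  shows "posn u v = i"
  unfolding posn_def
proof (rule the_equality)
  show "i < length u \<and> vidx (u!i) = v" using assms by simp
next
  fix i' assume "i' < length u \<and> vidx (u!i') = v"
  then show "i' = i" using MW_distinct[OF assms(1)] assms(2,3)
    by (metis length_map nth_eq_iff_index_eq nth_map)
qed

lemma posn_lt:
  assumes "u \<in> multilinear_words n" "v \<in> {1..n}"
  shows "posn u v < n"
proof -
  have "v \<in> set (map vidx u)" using assms by (simp add: multilinear_words_def)
  then obtain i where "i < length u" "vidx (u!i) = v" by (auto simp: in_set_conv_nth)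
  then show ?thesis using posn_unique[OF assms(1)] assms(1) by (auto simp: multilinear_words_def)
qed

definition enc :: "nat \<Rightarrow> svar list \<Rightarrow> nat list \<times> nat list \<times> (bool \<times> bool) list" where
  "enc n u = (map (lab (map vidx u)) [0..<n], map (\<lambda>v. lab (map vidx u) (posn u v)) [1..<Suc n], map kind u)"

lemma enc_inj:
  assumes u: "u \<in> multilinear_words n" and u': "u' \<in> multilinear_words n" and e: "enc n u = enc n u'"
  shows "u = u'"
proof -
  define xs where "xs = map vidx u"
  define ys where "ys = map vidx u'"
  have lu: "length u = n" "length u' = n" using u u' by (auto simp: multilinear_words_def)
  have su: "set xs = {1..n}" "set ys = {1..n}" using u u' by (auto simp: multilinear_words_def xs_def ys_def)
  have e1: "map (lab xs) [0..<n] = map (lab ys) [0..<n]"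
    and e2: "map (\<lambda>v. lab xs (posn u v)) [1..<Suc n] = map (\<lambda>v. lab ys (posn u' v)) [1..<Suc n]"
    and e3: "map kind u = map kind u'"
    using e by (auto simp: enc_def xs_def ys_def)
  have "xs = ys"
  proof (rule chain_determined[where Lx = "lab xs" and Ly = "lab ys"])
    show "distinct xs" "distinct ys" using MW_distinct u u' by (auto simp: xs_def ys_def)
    show "length xs = length ys" using lu by (simp add: xs_def ys_def)
    show "set xs = set ys" using su by simp
    show "xs!k < xs!j" if "j < k" "k < length xs" "lab xs j = lab xs k" for j k
      using lab_chain[OF \<open>distinct xs\<close> that] .
    show "ys!k < ys!j" if "j < k" "k < length ys" "lab ys j = lab ys k" for j k
      using lab_chain[OF \<open>distinct ys\<close> that] .
    show "lab xs k = lab ys k" if "k < length xs" for k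
    proof -
      have "k < n" using that lu by (simp add: xs_def)
      then show ?thesis using arg_cong[OF e1, of "\<lambda>l. l ! k"] by simp
    qed
    show "lab xs j = lab ys k" if "j < length xs" "k < length ys" "xs!j = ys!k" for j k
    proof -
      define v where "v = xs!j"
      have v: "v \<in> {1..n}" using that su nth_mem[OF that(1)] by (simp add: v_def)
      have pj: "posn u v = j" using posn_unique[OF u] that by (simp add: v_def xs_def)
      have pk: "posn u' v = k" using posn_unique[OF u'] that by (simp add: v_def ys_def)
      have "v - 1 < n" using v by auto
      moreover have "[1..<Suc n] ! (v - 1) = v" using v by (simp add: nth_upt del: upt_Suc)
      ultimately show ?thesis using arg_cong[OF e2, of "\<lambda>l. l ! (v - 1)"] pj pk by (simp del: upt_Suc)
    qed
  qed
  then show "u = u'"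
  proof (intro nth_equalityI)
    show "length u = length u'" using lu by simp
    fix i assume "i < length u"
    then show "u!i = u'!i" using arg_cong[OF e3, of "\<lambda>l. l ! i"] arg_cong[OF \<open>xs = ys\<close>, of "\<lambda>l. l ! i"] lu
      by (intro kind_inj) (auto simp: xs_def ys_def)
  qed
qed

lemma count_good:
  shows "card {u \<in> multilinear_words n. \<not> bad d u} \<le> (d - 1) ^ n * (d - 1) ^ n * 4 ^ n"
proof -
  define G where "G = {u \<in> multilinear_words n. \<not> bad d u}"
  define LS where "LS = {l. set l \<subseteq> {1..d-1} \<and> length l = n}"
  define KS where "KS = {l. set l \<subseteq> (UNIV :: (bool \<times> bool) set) \<and> length l = n}"
  have inj: "inj_on (enc n) G" unfolding G_def by (intro inj_onI) (auto intro: enc_inj)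
  have img: "enc n ` G \<subseteq> LS \<times> LS \<times> KS"
  proof
    fix t assume "t \<in> enc n ` G"
    then obtain u where u: "u \<in> multilinear_words n" "\<not> bad d u" and t: "t = enc n u" by (auto simp: G_def)
    have lu: "length u = n" using u by (simp add: multilinear_words_def)
    have a: "lab (map vidx u) k \<in> {1..d-1}" if "k < n" for k
      using lab_ge1[of "map vidx u" k] good_lab[OF u(2), of k] that lu by auto
    have b: "posn u v < n" if "v \<in> {1..n}" for v using posn_lt[OF u(1) that] .
    show "t \<in> LS \<times> LS \<times> KS" unfolding t enc_def LS_def KS_def using a b lu by auto
  qed
  have fin: "finite (LS \<times> LS \<times> KS)" unfolding LS_def KS_def
    by (intro finite_cartesian_product finite_lists_length_eq) auto
  have "card G = card (enc n ` G)" using card_image[OF inj] by simp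
  also have "\<dots> \<le> card (LS \<times> LS \<times> KS)" by (rule card_mono[OF fin img])
  also have "\<dots> = card LS * card LS * card KS" by (simp add: card_cartesian_product)
  also have "card LS = (d - 1) ^ n" unfolding LS_def by (subst card_lists_length_eq) auto
  also have "card KS = 4 ^ n" unfolding KS_def
    by (subst card_lists_length_eq) (auto simp: card_UNIV_bool UNIV_Times_UNIV[symmetric] card_cartesian_product simp del: UNIV_Times_UNIV)
  finally show ?thesis unfolding G_def .
qed

theorem corollary2p3:
  fixes sc :: "'f::field_char_0 \<Rightarrow> 'a::ring \<Rightarrow> 'a"
    and Ag :: "bool \<Rightarrow> 'a set"
    and star :: "'a \<Rightarrow> 'a"
  assumes "sharp_superalgebra sc Ag star"
    and "PI_algebra sc"
  shows "\<exists>d::real. \<forall>n\<ge>1. real (c_grs sc Ag star n) \<le> d ^ n"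
proof -
  interpret nalg sc using sharp_nalg[OF assms(1)] .
  obtain p :: "nat list \<Rightarrow> 'f" where p: "free_poly p" "p \<noteq> (\<lambda>_. 0)" "\<forall>s. eval_poly sc s p = 0"
    using assms(2) by (auto simp: PI_algebra_def)
  obtain d and \<beta> :: "nat list \<Rightarrow> 'f" where d1: "1 \<le> d" and b0: "\<beta> [0..<d] \<noteq> 0"
    and hML: "\<forall>a. (\<Sum>\<phi>\<in>perms d. sc (\<beta> \<phi>) (eval_word a \<phi>)) = 0"
    using multilin[OF p] by blast
  have "real (c_grs sc Ag star n) \<le> real (4 * (d - 1)^2) ^ n" for n
  proof -
    define G where "G = {u \<in> multilinear_words n. \<not> bad d u}"
    define Q where "Q = (P_grs n \<inter> sharp_superids sc Ag star :: (svar list \<Rightarrow> 'f) set)"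
    have "PV.dim (P_grs n :: (svar list \<Rightarrow> 'f) set) \<le> card G + PV.dim Q"
      by (rule dim_bound[where n = n]) (auto simp: G_def Q_def intro: reduce[OF d1 b0 hML])
    then have "c_grs sc Ag star n \<le> card G" by (simp add: c_grs_def Q_def)
    also have "\<dots> \<le> (d - 1) ^ n * (d - 1) ^ n * 4 ^ n" unfolding G_def by (rule count_good)
    also have "\<dots> = (4 * (d - 1)^2) ^ n" by (simp add: power_mult_distrib power2_eq_square mult_ac)
    finally show ?thesis by (metis of_nat_le_iff of_nat_power)
  qed
  then show ?thesis by blast
qed


end
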